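(* Assume $f:\mathbb{R}^n\to\mathbb{R}$ is convex with bounded level sets, and there exist $M_1,M_2>0$ such that $\|v\|\le M_1\|x\|+M_2$ for all $x\in\mathbb{R}^n$ and all $v\in\partial f(x)$. Let $\gamma_k,\delta_k,s_k>0$ for all $k$. Let $B>0$ be such that $\|x^*\|\le B$ and $\|v\|\le B$ for all $x^*\in X^*$ and all $v\in\partial f(x^* )$, and let $\rho\in[0,1]$ be arbitrary. Then the iterates of the random incremental penalty method surely satisfy, for all $x^*\in X^*$ and $k\ge1$, $$\begin{aligned}\|x_{k+1}-x^*\|^2\le{}&(1+4s_k^2M_1^2)\|x_k-x^*\|^2+2s_k\big((1-\rho)B+\rho(M_1B+M_2)\big)\mathrm{dist}(x_k,X)\\&+2s_k\rho\big(f^*-f(\Pi_X[x_k])\big)+2s_k\rho M_1\|x_k-x^*\|\,\mathrm{dist}(x_k,X)\\&+\frac{s_k\gamma_k\delta_k}{2\alpha_{\min}}-2s_k\gamma_k\,\mathrm{dist}(x_k,X_{i_k})+4s_k^2\big(M_1^2B^2+M_2^2+\gamma_k^2\big).\end{aligned}$$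
   Context: Let $a_1,\dots,a_m\in\mathbb{R}^n$ be nonzero vectors and $b_1,\dots,b_m\in\mathbb{R}$; $X_i=\{x:\langle a_i,x\rangle-b_i\le0\}$, $X=\bigcap_{i=1}^mX_i$ (assumed nonempty), $\alpha_{\min}=\min_i\|a_i\|$; $\Pi_X$ is the Euclidean projection onto $X$. $X^*$ and $f^*$ are the solution set and optimal value of $\min_{x\in X}f(x)$. For $\delta>0$, nonzero $a$ and scalar $b$: $h_\delta(x;a,b)=\frac{\langle a,x\rangle-b}{\|a\|}$ if $\langle a,x\rangle-b>\delta$, $\frac{(\langle a,x\rangle-b+\delta)^2}{4\delta\|a\|}$ if $-\delta\le\langle a,x\rangle-b\le\delta$, $0$ if $\langle a,x\rangle-b<-\delta$; its gradient is $\nabla h_\delta(x;a,b)=\frac{1}{\|a\|}p'_\delta(\langle a,x\rangle-b)\,a$ with $p'_\delta(s)=1$ for $s>\delta$, $\frac{s+\delta}{2\delta}$ for $|s|\le\delta$, $0$ for $s<-\delta$. Random incremental penalty method: from an initial point $x_1$, for $k\ge1$, $x_{k+1}=x_k-s_k\big[\tilde\nabla f(x_k)+\gamma_k\nabla h_{\delta_k}(x_k;a_{i_k},b_{i_k})\big]$, where $\tilde\nabla f(x_k)\in\partial f(x_k)$ and $i_k\in\{1,\dots,m\}$ is chosen uniformly at random. *)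

theory Defs
  imports "HOL-Analysis.Analysis"
begin

definition subdiff :: "('a::real_inner \<Rightarrow> real) \<Rightarrow> 'a \<Rightarrow> 'a set" where
  "subdiff f x = {v. \<forall>y. f y \<ge> f x + inner v (y - x)}"

definition halfspace :: "'a::real_inner \<Rightarrow> real \<Rightarrow> 'a set" where
  "halfspace a b = {x. inner a x - b \<le> 0}"

definition feas :: "nat \<Rightarrow> (nat \<Rightarrow> 'a::real_inner) \<Rightarrow> (nat \<Rightarrow> real) \<Rightarrow> 'a set" where
  "feas m a b = (\<Inter>i\<in>{1..m}. halfspace (a i) (b i))"

definition optval :: "('a \<Rightarrow> real) \<Rightarrow> 'a set \<Rightarrow> real" where
  "optval f X = (INF x\<in>X. f x)"

definition optset :: "('a \<Rightarrow> real) \<Rightarrow> 'a set \<Rightarrow> 'a set" where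
  "optset f X = {x\<in>X. \<forall>y\<in>X. f x \<le> f y}"

text \<open>Derivative of the smoothing p_delta.\<close>
definition dp :: "real \<Rightarrow> real \<Rightarrow> real" where
  "dp \<delta> s = (if s > \<delta> then 1 else if s < - \<delta> then 0 else (s + \<delta>) / (2 * \<delta>))"

definition hpen :: "real \<Rightarrow> 'a::real_inner \<Rightarrow> real \<Rightarrow> 'a \<Rightarrow> real" where
  "hpen \<delta> a b x = (let t = inner a x - b in
     if t > \<delta> then t / norm a
     else if t < - \<delta> then 0
     else (t + \<delta>)\<^sup>2 / (4 * \<delta> * norm a))"

definition grad_hpen :: "real \<Rightarrow> 'a::real_inner \<Rightarrow> real \<Rightarrow> 'a \<Rightarrow> 'a" where
  "grad_hpen \<delta> a b x = (dp \<delta> (inner a x - b) / norm a) *\<^sub>R a"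

end

theory Submission
  imports Defs
begin

lemma opt_subgrad:
  fixes f :: "'a::euclidean_space \<Rightarrow> real"
  assumes cf: "convex_on UNIV f" and cX: "convex X" and x0: "x0 \<in> X"
    and mn: "\<And>y. y \<in> X \<Longrightarrow> f x0 \<le> f y"
  shows "\<exists>v. v \<in> subdiff f x0 \<and> (\<forall>y\<in>X. inner v (y - x0) \<ge> 0)"
proof -
  define S where "S = epigraph UNIV f"
  define T where "T = X \<times> {..< f x0}"
  have cS: "convex S" unfolding S_def using cf by (rule convex_epigraphI)
  have cT: "convex T" unfolding T_def by (intro convex_Times cX convex_real_interval)
  have "(x0, f x0) \<in> S" unfolding S_def epigraph_def by auto
  hence nS: "S \<noteq> {}" by auto
  have "(x0, f x0 - 1) \<in> T" unfolding T_def using x0 by auto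
  hence nT: "T \<noteq> {}" by auto
  have dj: "S \<inter> T = {}" unfolding S_def T_def epigraph_def using mn by fastforce
  obtain wc \<beta> where wc: "wc \<noteq> 0" and hS: "\<forall>z\<in>S. inner wc z \<le> \<beta>" and hT: "\<forall>z\<in>T. inner wc z \<ge> \<beta>"
    using separating_hyperplane_sets[OF cS cT nS nT dj] by blast
  obtain w c where wcd: "wc = (w, c)" by (cases wc)
  have S': "inner w y + c * r \<le> \<beta>" if "f y \<le> r" for y r
    using hS that unfolding S_def epigraph_def wcd by auto
  have T': "inner w y + c * r \<ge> \<beta>" if "y \<in> X" "r < f x0" for y r
    using hT that unfolding T_def wcd by auto
  have "c \<le> 0" using S'[of x0 "f x0"] T'[OF x0, of "f x0 - 1"] by (auto simp: algebra_simps)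
  have "c \<noteq> 0"
  proof
    assume c0: "c = 0"
    have "inner w (x0 + w) \<le> \<beta>" using S'[of "x0 + w" "f (x0+w)"] c0 by auto
    moreover have "inner w x0 \<ge> \<beta>" using T'[OF x0, of "f x0 - 1"] c0 by auto
    ultimately have "inner w w \<le> 0" by (simp add: inner_add_right)
    hence "w = 0" by (metis inner_eq_zero_iff inner_ge_zero order_antisym)
    thus False using wc c0 wcd by (simp add: zero_prod_def)
  qed
  with \<open>c \<le> 0\<close> have cn: "c < 0" by simp
  have T'': "inner w y + c * f x0 \<ge> \<beta>" if y: "y \<in> X" for y
  proof (rule ccontr)
    assume nt: "\<not> ?thesis"
    define d where "d = \<beta> - (inner w y + c * f x0)"
    have dp: "d > 0" using nt unfolding d_def by simp
    have "inner w y + c * (f x0 - d / (- 2 * c)) \<ge> \<beta>"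
    proof (rule T'[OF y])
      have "d / (- 2 * c) > 0" using dp cn by (simp add: divide_pos_neg)
      thus "f x0 - d / (- 2 * c) < f x0" by linarith
    qed
    also have "c * (f x0 - d / (- 2 * c)) = c * f x0 + d / 2" using cn by (simp add: field_simps)
    finally show False using dp d_def by linarith
  qed
  define v where "v = (- 1 / c) *\<^sub>R w"
  have "v \<in> subdiff f x0"
    unfolding subdiff_def
  proof (clarify)
    fix y
    have a1: "inner w y + c * f y \<le> \<beta>" using S' by simp
    have a2: "inner w x0 + c * f x0 \<ge> \<beta>" using T''[OF x0] .
    have "c * f y \<le> c * f x0 + inner w x0 - inner w y" using a1 a2 by linarith
    hence "f y \<ge> f x0 + (inner w x0 - inner w y) / c" using cn
      by (simp add: field_simps)
    moreover have "(inner w x0 - inner w y) / c = inner v (y - x0)"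
      unfolding v_def using cn by (simp add: inner_diff_right field_simps)
    ultimately show "f x0 + inner v (y - x0) \<le> f y" by simp
  qed
  moreover have "inner v (y - x0) \<ge> 0" if y: "y \<in> X" for y
  proof -
    have "inner w y + c * f x0 \<ge> \<beta>" using T''[OF y] .
    moreover have "inner w x0 + c * f x0 \<le> \<beta>" using S'[of x0 "f x0"] by simp
    ultimately have "inner w (y - x0) \<ge> 0" by (simp add: inner_diff_right)
    thus ?thesis unfolding v_def using cn by (simp add: divide_nonneg_neg)
  qed
  ultimately show ?thesis by blast
qed


lemma halfspace_eq: "halfspace a b = {x. inner a x \<le> b}"
  unfolding halfspace_def by auto

lemma feas_closed: "closed (feas m a b)"
  unfolding feas_def halfspace_eq by (intro closed_INT ballI closed_halfspace_le)

lemma feas_convex: "convex (feas m a b)"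
  unfolding feas_def halfspace_eq by (intro convex_INT ballI convex_halfspace_le)

lemma infdist_cp:
  assumes "closed S" "S \<noteq> {}"
  shows "infdist x S = dist x (closest_point S x)"
proof (rule antisym)
  show "infdist x S \<le> dist x (closest_point S x)"
    by (rule infdist_le, rule closest_point_in_set[OF assms])
  show "dist x (closest_point S x) \<le> infdist x S"
    unfolding infdist_notempty[OF assms(2)]
    by (rule cINF_greatest[OF assms(2)], rule closest_point_le[OF assms(1)])
qed

lemma infdist_half:
  assumes "a \<noteq> 0"
  shows "infdist x (halfspace a b) \<le> max (inner a x - b) 0 / norm a"
proof (cases "inner a x - b \<le> 0")
  case True
  then have "x \<in> halfspace a b" unfolding halfspace_def by auto
  then show ?thesis using True by simp
next
  case False
  define t where "t = inner a x - b"
  define y where "y = x - (t / (norm a)\<^sup>2) *\<^sub>R a"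
  have "inner a y - b = 0" unfolding y_def t_def using assms
    by (simp add: inner_diff_right power2_norm_eq_inner)
  hence "y \<in> halfspace a b" unfolding halfspace_def by auto
  hence "infdist x (halfspace a b) \<le> dist x y" by (rule infdist_le)
  also have "dist x y = \<bar>t\<bar> / norm a" unfolding y_def dist_norm using assms
    by (simp add: power2_eq_square)
  finally show ?thesis using False t_def by simp
qed

lemma dp_range: "\<delta> > 0 \<Longrightarrow> 0 \<le> dp \<delta> s \<and> dp \<delta> s \<le> 1"
  unfolding dp_def by (auto simp: field_simps)

lemma norm_grad: "\<delta> > 0 \<Longrightarrow> a \<noteq> 0 \<Longrightarrow> norm (grad_hpen \<delta> a b x) \<le> 1"
  unfolding grad_hpen_def using dp_range[of \<delta> "inner a x - b"] by simp

lemma dp_ineq: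
  assumes d: "\<delta> > 0"
  shows "- 2 * dp \<delta> t * t + 2 * max t 0 \<le> \<delta> / 2"
proof -
  consider "t > \<delta>" | "t < - \<delta>" | "- \<delta> \<le> t" "t \<le> 0" | "0 \<le> t" "t \<le> \<delta>" by linarith
  then show ?thesis
  proof cases
    case 3
    have dq: "dp \<delta> t = (t + \<delta>) / (2 * \<delta>)" using 3 d unfolding dp_def by auto
    have e: "- 2 * dp \<delta> t * t = (- (t + \<delta>) * t) / \<delta>" unfolding dq using d by (simp add: field_simps)
    have "- (t + \<delta>) * t \<le> \<delta> / 2 * \<delta>"
    proof -
      have "0 \<le> (t + \<delta>/2)\<^sup>2" by simp
      thus ?thesis using mult_pos_pos[OF d d] unfolding power2_eq_square by (simp add: algebra_simps)
    qed
    hence "(- (t + \<delta>) * t) / \<delta> \<le> \<delta> / 2" using d by (simp add: pos_divide_le_eq)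
    thus ?thesis using e 3 by simp
  next
    case 4
    have dq: "dp \<delta> t = (t + \<delta>) / (2 * \<delta>)" using 4 d unfolding dp_def by auto
    have e: "- 2 * dp \<delta> t * t + 2 * t = (- (t + \<delta>) * t + 2 * t * \<delta>) / \<delta>" unfolding dq using d by (simp add: field_simps)
    have "- (t + \<delta>) * t + 2 * t * \<delta> \<le> \<delta> / 2 * \<delta>"
    proof -
      have "0 \<le> (t - \<delta>/2)\<^sup>2" by simp
      thus ?thesis using mult_pos_pos[OF d d] unfolding power2_eq_square by (simp add: algebra_simps)
    qed
    hence "(- (t + \<delta>) * t + 2 * t * \<delta>) / \<delta> \<le> \<delta> / 2" using d by (simp add: pos_divide_le_eq)
    thus ?thesis using e 4 by simp
  qed (use d in \<open>auto simp: dp_def\<close>)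
qed


lemma pen_bound:
  assumes a: "a \<noteq> 0" and d: "\<delta> > 0" and al: "0 < \<alpha>" "\<alpha> \<le> norm a"
    and xs: "inner a xs - b \<le> 0"
  shows "- 2 * inner (grad_hpen \<delta> a b x) (x - xs) \<le> \<delta> / (2 * \<alpha>) - 2 * infdist x (halfspace a b)"
proof -
  define t where "t = inner a x - b"
  define N where "N = norm a"
  have N: "N > 0" using a N_def by simp
  have dr: "0 \<le> dp \<delta> t" using dp_range[OF d] by blast
  have "inner (grad_hpen \<delta> a b x) (x - xs) = dp \<delta> t / N * (inner a x - inner a xs)"
    unfolding grad_hpen_def t_def N_def by (simp add: inner_diff_right diff_divide_distrib right_diff_distrib)
  also have "\<dots> \<ge> dp \<delta> t / N * t"
    using xs dr N unfolding t_def by (intro mult_left_mono) auto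
  finally have i1: "- 2 * inner (grad_hpen \<delta> a b x) (x - xs) \<le> - 2 * dp \<delta> t * t / N" by simp
  have i2: "infdist x (halfspace a b) \<le> max t 0 / N" using infdist_half[OF a] unfolding t_def N_def .
  have "- 2 * dp \<delta> t * t / N + 2 * (max t 0 / N) = (- 2 * dp \<delta> t * t + 2 * max t 0) / N"
    using N by (simp add: field_simps)
  also have "\<dots> \<le> (\<delta> / 2) / N" using dp_ineq[OF d, of t] N by (intro divide_right_mono) auto
  also have "\<dots> \<le> \<delta> / (2 * \<alpha>)" using al N d N_def by (simp add: frac_le)
  finally show ?thesis using i1 i2 by linarith
qed

lemma quad_bound:
  fixes n \<gamma> :: real
  shows "(n + \<gamma>)\<^sup>2 \<le> 4/3 * n\<^sup>2 + 4 * \<gamma>\<^sup>2"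
proof -
  have "0 \<le> (n - 3 * \<gamma>)\<^sup>2" by simp
  thus ?thesis by (simp add: power2_eq_square algebra_simps)
qed

lemma three_sq:
  fixes P Q R :: real
  shows "(P + Q + R)\<^sup>2 \<le> 3 * (P\<^sup>2 + Q\<^sup>2 + R\<^sup>2)"
proof -
  have "0 \<le> (P - Q)\<^sup>2 + (Q - R)\<^sup>2 + (P - R)\<^sup>2" by simp
  thus ?thesis by (simp add: power2_eq_square algebra_simps)
qed

lemma norm_diff_sq:
  fixes u w :: "'a::real_inner"
  shows "(norm (u - w))\<^sup>2 = (norm u)\<^sup>2 - 2 * inner w u + (norm w)\<^sup>2"
  unfolding power2_norm_eq_inner by (simp add: inner_diff_left inner_diff_right inner_commute)

theorem lemma9:
  fixes f :: "'a::euclidean_space \<Rightarrow> real"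
    and m :: nat and a :: "nat \<Rightarrow> 'a" and b :: "nat \<Rightarrow> real"
    and M1 M2 B \<rho> :: real
    and \<gamma> \<delta> s :: "nat \<Rightarrow> real"
    and x g :: "nat \<Rightarrow> 'a" and idx :: "nat \<Rightarrow> nat"
  assumes a_nz: "\<And>i. i \<in> {1..m} \<Longrightarrow> a i \<noteq> 0"
    and m_pos: "m \<ge> 1"
    and X_ne: "feas m a b \<noteq> {}"
    and f_convex: "convex_on UNIV f"
    and f_level: "\<And>c. bounded {y. f y \<le> c}"
    and M1_pos: "M1 > 0" and M2_pos: "M2 > 0"
    and subgrad_growth: "\<And>y v. v \<in> subdiff f y \<Longrightarrow> norm v \<le> M1 * norm y + M2"
    and \<gamma>_pos: "\<And>k. \<gamma> k > 0" and \<delta>_pos: "\<And>k. \<delta> k > 0" and s_pos: "\<And>k. s k > 0"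
    and B_pos: "B > 0"
    and B_bd: "\<And>xs v. xs \<in> optset f (feas m a b) \<Longrightarrow> norm xs \<le> B
                 \<and> (v \<in> subdiff f xs \<longrightarrow> norm v \<le> B)"
    and \<rho>_range: "0 \<le> \<rho>" "\<rho> \<le> 1"
    and idx_range: "\<And>k. k \<ge> 1 \<Longrightarrow> idx k \<in> {1..m}"
    and g_sub: "\<And>k. k \<ge> 1 \<Longrightarrow> g k \<in> subdiff f (x k)"
    and iter: "\<And>k. k \<ge> 1 \<Longrightarrow>
       x (Suc k) = x k - s k *\<^sub>R (g k + \<gamma> k *\<^sub>R grad_hpen (\<delta> k) (a (idx k)) (b (idx k)) (x k))"
  shows "\<forall>xs \<in> optset f (feas m a b). \<forall>k\<ge>1.
    (norm (x (Suc k) - xs))\<^sup>2 \<le>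
       (1 + 4 * (s k)\<^sup>2 * M1\<^sup>2) * (norm (x k - xs))\<^sup>2
     + 2 * s k * ((1 - \<rho>) * B + \<rho> * (M1 * B + M2)) * infdist (x k) (feas m a b)
     + 2 * s k * \<rho> * (optval f (feas m a b) - f (closest_point (feas m a b) (x k)))
     + 2 * s k * \<rho> * M1 * norm (x k - xs) * infdist (x k) (feas m a b)
     + s k * \<gamma> k * \<delta> k / (2 * Min ((\<lambda>i. norm (a i)) ` {1..m}))
     - 2 * s k * \<gamma> k * infdist (x k) (halfspace (a (idx k)) (b (idx k)))
     + 4 * (s k)\<^sup>2 * (M1\<^sup>2 * B\<^sup>2 + M2\<^sup>2 + (\<gamma> k)\<^sup>2)"
proof (intro ballI allI impI)
  fix xs :: 'a and k :: nat assume xsO: "xs \<in> optset f (feas m a b)" and k: "k \<ge> 1"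
  define X where "X = feas m a b"
  define i where "i = idx k"
  define h where "h = grad_hpen (\<delta> k) (a i) (b i) (x k)"
  define e where "e = x k - xs"
  define D where "D = infdist (x k) X"
  define p where "p = closest_point X (x k)"
  define \<alpha> where "\<alpha> = Min ((\<lambda>i. norm (a i)) ` {1..m})"
  define Di where "Di = infdist (x k) (halfspace (a i) (b i))"
  define G where "G = g k"
  have iR: "i \<in> {1..m}" using idx_range[OF k] i_def by simp
  have ai: "a i \<noteq> 0" using a_nz[OF iR] .
  have xsX: "xs \<in> X" and mn: "\<And>y. y \<in> X \<Longrightarrow> f xs \<le> f y"
    using xsO unfolding optset_def X_def by auto
  have cX: "closed X" "convex X" unfolding X_def by (rule feas_closed, rule feas_convex)
  have nX: "X \<noteq> {}" using xsX by auto
  have fstar: "optval f X = f xs"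
    unfolding optval_def
  proof (rule antisym)
    show "(INF y\<in>X. f y) \<le> f xs" by (rule cINF_lower[OF _ xsX]) (use mn in \<open>auto intro!: bdd_belowI2[where m="f xs"]\<close>)
    show "f xs \<le> (INF y\<in>X. f y)" by (rule cINF_greatest[OF nX mn])
  qed
  have nxs: "norm xs \<le> B" using B_bd[OF xsO] by blast
  obtain v where v: "v \<in> subdiff f xs" and vX: "\<And>y. y \<in> X \<Longrightarrow> inner v (y - xs) \<ge> 0"
    using opt_subgrad[OF f_convex cX(2) xsX mn] by blast
  have nv: "norm v \<le> B" using B_bd[OF xsO] v by blast
  have pX: "p \<in> X" unfolding p_def by (rule closest_point_in_set[OF cX(1) nX])
  have Dp: "D = norm (x k - p)" unfolding D_def p_def infdist_cp[OF cX(1) nX] dist_norm ..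
  have D0: "D \<ge> 0" unfolding D_def by (rule infdist_nonneg)
  have pxs: "norm (p - xs) \<le> norm e"
    using closest_point_lipschitz[OF cX(2) cX(1) nX, of "x k" xs] closest_point_self[OF xsX]
    unfolding p_def e_def dist_norm by simp
  obtain w where w: "w \<in> subdiff f p"
    using opt_subgrad[OF f_convex convex_singleton[of p], of p] by auto
  have A: "f xs - f (x k) \<le> B * D"
  proof -
    have "f (x k) \<ge> f xs + inner v (x k - xs)" using v unfolding subdiff_def by auto
    moreover have "inner v (x k - xs) = inner v (x k - p) + inner v (p - xs)"
      by (simp add: inner_diff_right)
    moreover have "inner v (p - xs) \<ge> 0" using vX[OF pX] .
    moreover have "inner v (x k - p) \<ge> - (norm v * D)"
      using Cauchy_Schwarz_ineq2[of v "x k - p"] Dp by (auto simp: abs_le_iff)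
    moreover have "norm v * D \<le> B * D" using nv D0 by (rule mult_right_mono)
    ultimately show ?thesis by linarith
  qed
  have Bb: "f p - f (x k) \<le> (M1 * (norm e + B) + M2) * D"
  proof -
    have "f (x k) \<ge> f p + inner w (x k - p)" using w unfolding subdiff_def by auto
    moreover have "inner w (x k - p) \<ge> - (norm w * D)"
      using Cauchy_Schwarz_ineq2[of w "x k - p"] Dp by (auto simp: abs_le_iff)
    moreover have "norm w \<le> M1 * (norm e + B) + M2"
    proof -
      have "norm w \<le> M1 * norm p + M2" using subgrad_growth[OF w] .
      moreover have "norm p \<le> norm e + B" using norm_triangle_ineq[of "p - xs" xs] pxs nxs by simp
      ultimately show ?thesis using M1_pos by (smt (verit) mult_left_mono)
    qed
    moreover have "norm w * D \<le> (M1 * (norm e + B) + M2) * D" using calculation(3) D0 by (rule mult_right_mono)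
    ultimately show ?thesis by linarith
  qed
  have cvx: "- inner G e \<le> f xs - f (x k)"
  proof -
    have "f xs \<ge> f (x k) + inner (g k) (xs - x k)" using g_sub[OF k] unfolding subdiff_def by blast
    thus ?thesis unfolding G_def e_def by (simp add: inner_diff_right)
  qed
  have comb: "f xs - f (x k) \<le> (1 - \<rho>) * B * D + \<rho> * ((M1 * B + M2) * D + (f xs - f p) + M1 * norm e * D)"
  proof -
    have "f xs - f (x k) = (1 - \<rho>) * (f xs - f (x k)) + \<rho> * ((f p - f (x k)) + (f xs - f p))"
      by (simp add: algebra_simps)
    also have "\<dots> \<le> (1 - \<rho>) * (B * D) + \<rho> * ((M1 * (norm e + B) + M2) * D + (f xs - f p))"
      using A Bb \<rho>_range by (intro add_mono mult_left_mono) auto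
    finally show ?thesis by (simp add: algebra_simps)
  qed
  have al: "0 < \<alpha>" "\<alpha> \<le> norm (a i)"
  proof -
    have fin: "finite ((\<lambda>i. norm (a i)) ` {1..m})" "(\<lambda>i. norm (a i)) ` {1..m} \<noteq> {}" using m_pos by auto
    show "\<alpha> \<le> norm (a i)" unfolding \<alpha>_def using iR fin by (intro Min_le) auto
    show "0 < \<alpha>" unfolding \<alpha>_def using fin a_nz by (subst Min_gr_iff) auto
  qed
  have xsi: "inner (a i) xs - b i \<le> 0" using xsX iR unfolding X_def feas_def halfspace_def by auto
  have pen: "- 2 * inner h e \<le> \<delta> k / (2 * \<alpha>) - 2 * Di"
    unfolding h_def e_def Di_def by (rule pen_bound[OF ai \<delta>_pos al xsi])
  have nh: "norm h \<le> 1" unfolding h_def by (rule norm_grad[OF \<delta>_pos ai])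
  have quad: "(norm (G + \<gamma> k *\<^sub>R h))\<^sup>2 \<le> 4 * M1\<^sup>2 * (norm e)\<^sup>2 + 4 * (M1\<^sup>2 * B\<^sup>2 + M2\<^sup>2 + (\<gamma> k)\<^sup>2)"
  proof -
    have nG: "norm G \<le> M1 * norm e + M1 * B + M2"
    proof -
      have "norm G \<le> M1 * norm (x k) + M2" using subgrad_growth[OF g_sub[OF k]] G_def by simp
      moreover have "norm (x k) \<le> norm e + B" using norm_triangle_ineq[of e xs] nxs e_def by simp
      ultimately show ?thesis using M1_pos by (smt (verit) mult_left_mono distrib_left)
    qed
    have "norm (G + \<gamma> k *\<^sub>R h) \<le> norm G + \<gamma> k"
    proof -
      have "norm (\<gamma> k *\<^sub>R h) \<le> \<gamma> k" using nh \<gamma>_pos[of k] by (simp add: mult_left_le)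
      thus ?thesis using norm_triangle_ineq[of G "\<gamma> k *\<^sub>R h"] by linarith
    qed
    hence "(norm (G + \<gamma> k *\<^sub>R h))\<^sup>2 \<le> (norm G + \<gamma> k)\<^sup>2"
      by (rule power_mono) simp
    also have "\<dots> \<le> 4/3 * (norm G)\<^sup>2 + 4 * (\<gamma> k)\<^sup>2" by (rule quad_bound)
    also have "(norm G)\<^sup>2 \<le> (M1 * norm e + M1 * B + M2)\<^sup>2" using nG by (rule power_mono) simp
    also have "\<dots> \<le> 3 * ((M1 * norm e)\<^sup>2 + (M1 * B)\<^sup>2 + M2\<^sup>2)" by (rule three_sq)
    finally show ?thesis by (simp add: power_mult_distrib algebra_simps)
  qed
  have sp: "s k > 0" using s_pos .
  have E: "(norm (x (Suc k) - xs))\<^sup>2 = (norm e)\<^sup>2 - 2 * s k * inner G e - 2 * s k * \<gamma> k * inner h e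
            + (s k)\<^sup>2 * (norm (G + \<gamma> k *\<^sub>R h))\<^sup>2"
  proof -
    have eq: "x (Suc k) - xs = e - s k *\<^sub>R (G + \<gamma> k *\<^sub>R h)"
      unfolding iter[OF k] e_def G_def h_def i_def by simp
    have nsq: "(norm (s k *\<^sub>R (G + \<gamma> k *\<^sub>R h)))\<^sup>2 = (s k)\<^sup>2 * (norm (G + \<gamma> k *\<^sub>R h))\<^sup>2"
      by (simp add: power_mult_distrib)
    show ?thesis unfolding eq norm_diff_sq nsq using sp
      by (simp add: inner_add_left power_mult_distrib algebra_simps)
  qed
  have gp: "\<gamma> k > 0" using \<gamma>_pos .
  have I1: "- 2 * s k * inner G e \<le> 2 * s k * ((1 - \<rho>) * B * D + \<rho> * ((M1 * B + M2) * D + (f xs - f p) + M1 * norm e * D))"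
    using mult_left_mono[OF order.trans[OF cvx comb], of "2 * s k"] sp by simp
  have I2: "- 2 * s k * \<gamma> k * inner h e \<le> s k * \<gamma> k * (\<delta> k / (2 * \<alpha>) - 2 * Di)"
    using mult_left_mono[OF pen, of "s k * \<gamma> k"] sp gp by simp
  have I3: "(s k)\<^sup>2 * (norm (G + \<gamma> k *\<^sub>R h))\<^sup>2 \<le> (s k)\<^sup>2 * (4 * M1\<^sup>2 * (norm e)\<^sup>2 + 4 * (M1\<^sup>2 * B\<^sup>2 + M2\<^sup>2 + (\<gamma> k)\<^sup>2))"
    using quad by (rule mult_left_mono) simp
  show "(norm (x (Suc k) - xs))\<^sup>2 \<le>
       (1 + 4 * (s k)\<^sup>2 * M1\<^sup>2) * (norm (x k - xs))\<^sup>2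
     + 2 * s k * ((1 - \<rho>) * B + \<rho> * (M1 * B + M2)) * infdist (x k) (feas m a b)
     + 2 * s k * \<rho> * (optval f (feas m a b) - f (closest_point (feas m a b) (x k)))
     + 2 * s k * \<rho> * M1 * norm (x k - xs) * infdist (x k) (feas m a b)
     + s k * \<gamma> k * \<delta> k / (2 * Min ((\<lambda>i. norm (a i)) ` {1..m}))
     - 2 * s k * \<gamma> k * infdist (x k) (halfspace (a (idx k)) (b (idx k)))
     + 4 * (s k)\<^sup>2 * (M1\<^sup>2 * B\<^sup>2 + M2\<^sup>2 + (\<gamma> k)\<^sup>2)"
    unfolding X_def[symmetric] fstar e_def[symmetric] D_def[symmetric] p_def[symmetric]
      \<alpha>_def[symmetric] i_def[symmetric] Di_def[symmetric] E
    using I1 I2 I3 by (simp add: algebra_simps)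
qed

end
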